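(* Let $H=E+D$ and $K=E'+D'$ be closed additive subgroups of $\mathbb{R}^{n}$ (with decompositions as in the context) and let $f:H\to K$ be a homomorphism of closed additive groups. (i) If $f$ is injective, then $f:H\to f(H)$ is an isomorphism of closed additive groups. (ii) If $f$ is surjective and $F$ is a closed additive subgroup which is a supplement of $\mathrm{Ker}(f)$ in $H$ with defect $0$, then the restriction $f_{|F}:F\to K$ is an isomorphism of closed additive groups; moreover $\Re(\widetilde{\mathrm{dim}}(K))=\Re(\widetilde{\mathrm{dim}}(H))-\Re(\widetilde{\mathrm{dim}}(\mathrm{Ker}(f)))$.
   Context: Every closed additive subgroup $G$ of $\mathbb{R}^n$ can be written $G=E+D$ with $E$ a vector subspace and $D$ a discrete additive subgroup with $E\cap\mathrm{vect}(D)=\{0\}$ ($\mathrm{vect}$ = real span). For closed subgroups with such decompositions $G_1=E_1+D_1$, $G_2=E_2+D_2$, a map $g:G_1\to G_2$ is a homomorphism of closed additive groups if there are a linear map $g_1:E_1\to E_2$ and a group homomorphism $g_2:D_1\to D_2$ with $g(\lambda x+py)=\lambda g_1(x)+pg_2(y)$ for all $\lambda\in\mathbb{R}$, $p\in\mathbb{Z}$, $x\in E_1$, $y\in D_1$; it is an isomorphism of closed additive groups if it is invertible (with inverse of the same kind). Complex dimension: for an additive subgroup $G$, $\widetilde{\mathrm{dim}}(G):=p+i(q-p)$ with $p=\max\{\dim V: V\text{ a vector subspace},\ V\subset G\}$, $q=\dim\mathrm{vect}(G)$. A subgroup $F\subset H$ is a supplement of $\mathrm{Ker}(f)$ in $H$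 with defect $0$ if $F+\mathrm{Ker}(f)=H$, $\Re(\widetilde{\mathrm{dim}}(F\cap\mathrm{Ker}(f)))=0$ and $\Im(\widetilde{\mathrm{dim}}(F\cap\mathrm{Ker}(f)))=0$. *)

theory Defs
  imports "HOL-Analysis.Analysis"
begin

definition add_subgroup :: "'a::real_vector set \<Rightarrow> bool" where
  "add_subgroup G \<longleftrightarrow> 0 \<in> G \<and> (\<forall>x\<in>G. \<forall>y\<in>G. x + y \<in> G) \<and> (\<forall>x\<in>G. - x \<in> G)"

definition closed_add_subgroup :: "'a::real_normed_vector set \<Rightarrow> bool" where
  "closed_add_subgroup G \<longleftrightarrow> closed G \<and> add_subgroup G"

definition dsum :: "'a::real_vector set \<Rightarrow> 'a set \<Rightarrow> 'a set" where
  "dsum E D = {x + y | x y. x \<in> E \<and> y \<in> D}"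

definition closed_decomp :: "'a::euclidean_space set \<Rightarrow> 'a set \<Rightarrow> 'a set \<Rightarrow> bool" where
  "closed_decomp G E D \<longleftrightarrow> subspace E \<and> add_subgroup D \<and> discrete D
     \<and> E \<inter> span D = {0} \<and> G = dsum E D"

definition closed_hom :: "'a::euclidean_space set \<Rightarrow> 'a set \<Rightarrow> 'a set \<Rightarrow> 'a set \<Rightarrow> ('a \<Rightarrow> 'a) \<Rightarrow> bool" where
  "closed_hom E1 D1 E2 D2 g \<longleftrightarrow> (\<exists>g1 g2.
      (\<forall>x\<in>E1. g1 x \<in> E2)
    \<and> (\<forall>x\<in>E1. \<forall>y\<in>E1. \<forall>c::real. g1 (x + y) = g1 x + g1 y \<and> g1 (c *\<^sub>R x) = c *\<^sub>R g1 x)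
    \<and> (\<forall>y\<in>D1. g2 y \<in> D2)
    \<and> (\<forall>y\<in>D1. \<forall>z\<in>D1. g2 (y + z) = g2 y + g2 z)
    \<and> (\<forall>(c::real) x (p::int) y. x \<in> E1 \<longrightarrow> y \<in> D1 \<longrightarrow>
          g (c *\<^sub>R x + of_int p *\<^sub>R y) = c *\<^sub>R g1 x + of_int p *\<^sub>R g2 y))"

definition closed_iso :: "'a::euclidean_space set \<Rightarrow> 'a set \<Rightarrow> 'a set \<Rightarrow> 'a set \<Rightarrow> ('a \<Rightarrow> 'a) \<Rightarrow> bool" where
  "closed_iso E1 D1 E2 D2 g \<longleftrightarrow> closed_hom E1 D1 E2 D2 g \<and>
     (\<exists>h. closed_hom E2 D2 E1 D1 h \<and> (\<forall>x\<in>dsum E1 D1. h (g x) = x)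
          \<and> (\<forall>y\<in>dsum E2 D2. g (h y) = y))"

definition cdim :: "'a::euclidean_space set \<Rightarrow> complex" where
  "cdim G = (let p = Max {dim V | V. subspace V \<and> V \<subseteq> G}; q = dim (span G)
             in Complex (real p) (real q - real p))"

definition kernel_on :: "'a set \<Rightarrow> ('a \<Rightarrow> 'b::zero) \<Rightarrow> 'a set" where
  "kernel_on H f = {x \<in> H. f x = 0}"

definition supplement_defect0 :: "'a::euclidean_space set \<Rightarrow> 'a set \<Rightarrow> 'a set \<Rightarrow> bool" where
  "supplement_defect0 F N H \<longleftrightarrow> F \<subseteq> H \<and> dsum F N = H
     \<and> Re (cdim (F \<inter> N)) = 0 \<and> Im (cdim (F \<inter> N)) = 0"

end

theory Submission
  imports Defs
begin

lemma add_subgroup_diff: "add_subgroup G \<Longrightarrow> x \<in> G \<Longrightarrow> y \<in> G \<Longrightarrow> x - y \<in> G"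
proof -
  assume a: "add_subgroup G" "x \<in> G" "y \<in> G"
  then have "- y \<in> G" unfolding add_subgroup_def by blast
  then have "x + - y \<in> G" using a unfolding add_subgroup_def by blast
  then show ?thesis by simp
qed

lemma add_subgroup_nat_mult: "add_subgroup G \<Longrightarrow> x \<in> G \<Longrightarrow> of_nat n *\<^sub>R x \<in> G"
  proof (induction n)
  case 0 then show ?case by (simp add: add_subgroup_def)
next
  case (Suc n)
  have "of_nat (Suc n) *\<^sub>R x = x + of_nat n *\<^sub>R x" by (simp add: scaleR_left_distrib)
  then show ?case using Suc by (simp add: add_subgroup_def)
qed

lemma add_subgroup_int_mult:
  assumes "add_subgroup G" "x \<in> G" shows "of_int p *\<^sub>R x \<in> G"
proof (cases "p \<ge> 0")
  case True
  define n where "n = nat p"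
  have "p = int n" using True by (simp add: n_def)
  then show ?thesis using add_subgroup_nat_mult[OF assms] by simp
next
  case False
  define n where "n = nat (-p)"
  have "p = - int n" using False by (simp add: n_def)
  then have "of_int p *\<^sub>R x = - (of_nat n *\<^sub>R x)" by simp
  then show ?thesis using add_subgroup_nat_mult[OF assms, of n] assms(1) unfolding add_subgroup_def by simp
qed

lemma decomp_unique:
  fixes E S :: "'a::real_vector set"
  assumes "E \<inter> S = {0}" "subspace E" "subspace S" "e \<in> E" "e' \<in> E" "d \<in> S" "d' \<in> S" "e + d = e' + d'"
  shows "e = e' \<and> d = d'"
proof -
  have eq: "e - e' = d' - d"
  proof -
    have "e - e' = (e + d) - (e' + d)" by (simp add: algebra_simps)
    also have "\<dots> = (e' + d') - (e' + d)" by (simp only: assms(8))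
    also have "\<dots> = d' - d" by (simp add: algebra_simps)
    finally show ?thesis .
  qed
  have m1: "e - e' \<in> E" using assms(2,4,5) by (rule subspace_diff)
  have m2: "d' - d \<in> S" using assms(3,7,6) by (rule subspace_diff)
  have "e - e' \<in> E \<inter> S" using m1 m2 eq by simp
  then have "e - e' \<in> {0}" by (simp only: assms(1))
  then have ee: "e = e'" by simp
  then have "d = d'" using assms(8) by simp
  then show ?thesis using ee by simp
qed

lemma disc0:
  fixes D :: "'a::real_normed_vector set"
  assumes "add_subgroup D" "discrete D"
  obtains e where "e > 0" "\<And>x. x \<in> D \<Longrightarrow> norm x < e \<Longrightarrow> x = 0"
proof -
  have "0 \<in> D" using assms(1) by (simp add: add_subgroup_def)
  then have "0 isolated_in D" using assms(2) by (simp add: discrete_def)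
  then obtain e where e: "e > 0" "\<And>y. y \<in> D \<Longrightarrow> dist 0 y < e \<Longrightarrow> y = 0" using isolated_inE_dist[OF \<open>0 isolated_in D\<close>] by blast
  show ?thesis by (rule that[OF e(1)]) (use e(2) in \<open>auto simp: dist_norm\<close>)
qed

lemma disc_unif:
  fixes D :: "'a::real_normed_vector set"
  assumes "add_subgroup D" "discrete D"
  obtains e where "e > 0" "\<And>x y. x \<in> D \<Longrightarrow> y \<in> D \<Longrightarrow> dist x y < e \<Longrightarrow> x = y"
proof -
  obtain e where e: "e > 0" "\<And>x. x \<in> D \<Longrightarrow> norm x < e \<Longrightarrow> x = 0" using disc0[OF assms] by blast
  show ?thesis
  proof (rule that[OF e(1)])
    fix x y assume "x \<in> D" "y \<in> D" "dist x y < e"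
    then have "x - y = 0" using e(2)[of "x - y"] add_subgroup_diff[OF assms(1)] by (simp add: dist_norm)
    then show "x = y" by simp
  qed
qed

lemma linear_on_extend:
  fixes g :: "'a::euclidean_space \<Rightarrow> 'b::euclidean_space"
  assumes S: "subspace S"
    and add: "\<And>x y. x \<in> S \<Longrightarrow> y \<in> S \<Longrightarrow> g (x + y) = g x + g y"
    and sc: "\<And>x c. x \<in> S \<Longrightarrow> g (c *\<^sub>R x) = c *\<^sub>R g x"
  obtains L where "linear L" "\<And>x. x \<in> S \<Longrightarrow> L x = g x"
proof -
  obtain B where B: "B \<subseteq> S" "independent B" "S \<subseteq> span B" "card B = dim S" by (rule basis_exists)
  obtain L where L: "linear L" "\<forall>x\<in>B. L x = g x" using linear_independent_extend[OF B(2)] by blast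
  have g0: "g 0 = 0" using sc[of 0 0] S by (simp add: subspace_0)
  have "x \<in> S \<and> L x = g x" if "x \<in> span B" for x
    using that
  proof (induction rule: span_induct)
    case base
    show ?case unfolding subspace_def
    proof (intro conjI allI impI ballI)
      show "0 \<in> {x. x \<in> S \<and> L x = g x}" using g0 S L(1) by (simp add: subspace_0 linear_0)
    next
      fix x y assume "x \<in> {x. x \<in> S \<and> L x = g x}" "y \<in> {x. x \<in> S \<and> L x = g x}"
      then show "x + y \<in> {x. x \<in> S \<and> L x = g x}" using add S L(1) by (simp add: subspace_add linear_add)
    next
      fix c x assume "x \<in> {x. x \<in> S \<and> L x = g x}"
      then show "c *\<^sub>R x \<in> {x. x \<in> S \<and> L x = g x}" using sc S L(1) by (simp add: subspace_scale linear_scale)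
    qed
  next
    case (step x) then show ?case using B L by auto
  qed
  then show ?thesis using that L(1) B(3) by blast
qed


lemma proj_exists:
  fixes E S :: "'a::euclidean_space set"
  assumes sE: "subspace E" and sS: "subspace S" and i: "E \<inter> S = {0}"
  obtains P where "linear P" "\<And>e s. e \<in> E \<Longrightarrow> s \<in> S \<Longrightarrow> P (e + s) = s"
proof -
  define g where "g x = (SOME s. s \<in> S \<and> (\<exists>e\<in>E. x = e + s))" for x
  have gs: "g (e + s) = s" if "e \<in> E" "s \<in> S" for e s
    unfolding g_def
  proof (rule some_equality)
    show "s \<in> S \<and> (\<exists>e'\<in>E. e + s = e' + s)" using that by auto
  next
    fix x assume "x \<in> S \<and> (\<exists>e'\<in>E. e + s = e' + x)"
    then obtain e' where "x \<in> S" "e' \<in> E" "e + s = e' + x" by auto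
    then show "x = s" using decomp_unique[OF i sE sS, of e e' s x] that by auto
  qed
  define T where "T = {x + y |x y. x \<in> E \<and> y \<in> S}"
  have sT: "subspace T" unfolding T_def by (rule subspace_sums[OF sE sS])
  obtain L where L: "linear L" "\<And>x. x \<in> T \<Longrightarrow> L x = g x"
  proof (rule linear_on_extend[OF sT])
    fix x y assume "x \<in> T" "y \<in> T"
    then obtain e1 s1 e2 s2 where h: "e1 \<in> E" "s1 \<in> S" "e2 \<in> E" "s2 \<in> S" "x = e1 + s1" "y = e2 + s2"
      unfolding T_def by auto
    have "x + y = (e1 + e2) + (s1 + s2)" using h by (simp add: algebra_simps)
    moreover have "e1 + e2 \<in> E" "s1 + s2 \<in> S" using h sE sS by (simp_all add: subspace_add)
    ultimately have "g (x + y) = s1 + s2" using gs by simp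
    moreover have "g x = s1" "g y = s2" using h gs by simp_all
    ultimately show "g (x + y) = g x + g y" by simp
  next
    fix x c assume "x \<in> T"
    then obtain e1 s1 where h: "e1 \<in> E" "s1 \<in> S" "x = e1 + s1" unfolding T_def by auto
    have "c *\<^sub>R x = c *\<^sub>R e1 + c *\<^sub>R s1" using h by (simp add: algebra_simps)
    moreover have "c *\<^sub>R e1 \<in> E" "c *\<^sub>R s1 \<in> S" using h sE sS by (simp_all add: subspace_scale)
    ultimately have "g (c *\<^sub>R x) = c *\<^sub>R s1" using gs by simp
    moreover have "g x = s1" using h gs by simp
    ultimately show "g (c *\<^sub>R x) = c *\<^sub>R g x" by simp
  qed auto
  show ?thesis
  proof (rule that[OF L(1)])
    fix e s assume "e \<in> E" "s \<in> S"
    then have "e + s \<in> T" unfolding T_def by auto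
    then show "L (e + s) = s" using L(2) gs \<open>e \<in> E\<close> \<open>s \<in> S\<close> by simp
  qed
qed

lemma Re_cdim:
  fixes X W :: "'a::euclidean_space set"
  assumes "subspace W" "W \<subseteq> X" "\<And>V. subspace V \<Longrightarrow> V \<subseteq> X \<Longrightarrow> V \<subseteq> W"
  shows "Re (cdim X) = real (dim W)"
proof -
  let ?A = "{dim V |V. subspace V \<and> V \<subseteq> X}"
  have "?A \<subseteq> {..DIM('a)}" using dim_subset_UNIV by auto
  then have fin: "finite ?A" by (rule finite_subset) simp
  have "Max ?A = dim W"
  proof (rule Max_eqI[OF fin])
    fix y assume "y \<in> ?A"
    then obtain V where "y = dim V" "subspace V" "V \<subseteq> X" by auto
    then show "y \<le> dim W" using assms(3) dim_subset by blast
  next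
    show "dim W \<in> ?A" using assms by blast
  qed
  then show ?thesis by (simp add: cdim_def Let_def)
qed

lemma cdim_zero:
  fixes X :: "'a::euclidean_space set"
  assumes "Re (cdim X) = 0" "Im (cdim X) = 0"
  shows "X \<subseteq> {0}"
proof -
  have "real (dim (span X)) = 0" using assms by (simp add: cdim_def Let_def)
  then show ?thesis by simp
qed

lemma dsum_sub:
  fixes A B :: "'a::real_vector set"
  assumes sA: "subspace A" and gB: "add_subgroup B"
  shows "add_subgroup (dsum A B)"
  unfolding add_subgroup_def
proof (intro conjI ballI)
  have "0 = 0 + (0::'a)" by simp
  moreover have "0 \<in> A" using sA by (simp add: subspace_0)
  moreover have "0 \<in> B" using gB by (simp add: add_subgroup_def)
  ultimately show "0 \<in> dsum A B" unfolding dsum_def by blast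
next
  fix x y assume "x \<in> dsum A B" "y \<in> dsum A B"
  then obtain a b a' b' where h: "a \<in> A" "b \<in> B" "x = a + b" "a' \<in> A" "b' \<in> B" "y = a' + b'"
    unfolding dsum_def by blast
  have "x + y = (a + a') + (b + b')" using h by (simp add: algebra_simps)
  moreover have "a + a' \<in> A" using h sA by (simp add: subspace_add)
  moreover have "b + b' \<in> B" using h gB by (simp add: add_subgroup_def)
  ultimately show "x + y \<in> dsum A B" unfolding dsum_def by blast
next
  fix x assume "x \<in> dsum A B"
  then obtain a b where h: "a \<in> A" "b \<in> B" "x = a + b" unfolding dsum_def by blast
  have "- x = (- a) + (- b)" using h by simp
  moreover have "- a \<in> A" using h sA by (simp add: subspace_neg)
  moreover have "- b \<in> B" using h gB by (simp add: add_subgroup_def)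
  ultimately show "- x \<in> dsum A B" unfolding dsum_def by blast
qed

lemma maxsub_gen:
  fixes E D :: "'a::euclidean_space set"
  assumes sE: "subspace E" and gD: "add_subgroup D" and discD: "discrete D" and iD: "E \<inter> span D = {0}"
  assumes "subspace V" "V \<subseteq> dsum E D" shows "V \<subseteq> E"
proof
  fix v assume v: "v \<in> V"
  then have "v \<in> dsum E D" using assms(6) by blast
  then obtain e d where ed: "e \<in> E" "d \<in> D" "v = e + d" unfolding dsum_def by blast
  have td: "t *\<^sub>R d \<in> D" for t
  proof -
    have "t *\<^sub>R v \<in> dsum E D" using assms(5,6) v by (auto simp: subspace_scale)
    then obtain e1 d1 where "e1 \<in> E" "d1 \<in> D" "t *\<^sub>R v = e1 + d1" by (auto simp: dsum_def)
    moreover have "t *\<^sub>R v = t *\<^sub>R e + t *\<^sub>R d" using ed by (simp add: scaleR_right_distrib)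
    moreover have "t *\<^sub>R e \<in> E" using sE ed by (simp add: subspace_scale)
    moreover have "t *\<^sub>R d \<in> span D" using ed by (simp add: span_base span_scale)
    moreover have "d1 \<in> span D" using calculation by (simp add: span_base)
    ultimately have "t *\<^sub>R d = d1" using decomp_unique[OF iD sE subspace_span, of "t *\<^sub>R e" e1 "t *\<^sub>R d" d1] by auto
    then show ?thesis using \<open>d1 \<in> D\<close> by simp
  qed
  obtain eps where eps: "eps > 0" "\<And>x. x \<in> D \<Longrightarrow> norm x < eps \<Longrightarrow> x = 0" using disc0[OF gD discD] by blast
  have "d = 0"
  proof (rule ccontr)
    assume "d \<noteq> 0"
    then have nd: "norm d > 0" by simp
    define t where "t = eps / (2 * norm d)"
    have tpos: "t > 0" using nd eps by (simp add: t_def)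
    have "norm (t *\<^sub>R d) = t * norm d" using tpos by simp
    also have "\<dots> = eps / 2" using nd by (simp add: t_def)
    finally have "norm (t *\<^sub>R d) < eps" using eps by simp
    then have "t *\<^sub>R d = 0" using eps(2) td[of t] by blast
    then show False using tpos \<open>d \<noteq> 0\<close> by simp
  qed
  then show "v \<in> E" using ed by simp
qed

locale hsetup =
  fixes E D E' D' :: "'a::euclidean_space set" and f g1 g2 :: "'a \<Rightarrow> 'a"
  assumes sE: "subspace E" and gD: "add_subgroup D" and discD: "discrete D" and iD: "E \<inter> span D = {0}"
    and sE': "subspace E'" and gD': "add_subgroup D'" and discD': "discrete D'" and iD': "E' \<inter> span D' = {0}"
    and g1E: "\<And>x. x \<in> E \<Longrightarrow> g1 x \<in> E'"
    and g1add: "\<And>x y. x \<in> E \<Longrightarrow> y \<in> E \<Longrightarrow> g1 (x + y) = g1 x + g1 y"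
    and g1sc: "\<And>x c. x \<in> E \<Longrightarrow> g1 (c *\<^sub>R x) = c *\<^sub>R g1 x"
    and g2D: "\<And>y. y \<in> D \<Longrightarrow> g2 y \<in> D'"
    and g2add: "\<And>x y. x \<in> D \<Longrightarrow> y \<in> D \<Longrightarrow> g2 (x + y) = g2 x + g2 y"
    and hom: "\<And>c x p y. x \<in> E \<Longrightarrow> y \<in> D \<Longrightarrow> f (c *\<^sub>R x + of_int p *\<^sub>R y) = c *\<^sub>R g1 x + of_int p *\<^sub>R g2 y"
begin

lemma zE: "0 \<in> E" using sE by (simp add: subspace_0)
lemma zE': "0 \<in> E'" using sE' by (simp add: subspace_0)
lemma zD: "0 \<in> D" using gD by (simp add: add_subgroup_def)
lemma zD': "0 \<in> D'" using gD' by (simp add: add_subgroup_def)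
lemma iD'': "E' \<inter> D' = {0}"
proof -
  have "D' \<subseteq> span D'" by (rule span_superset)
  then show ?thesis using iD' zE' zD' by auto
qed

lemma fE: "x \<in> E \<Longrightarrow> f x = g1 x"
  using hom[of x 0 1 0] zD g2add[of 0 0] by simp
lemma fD: "y \<in> D \<Longrightarrow> f y = g2 y"
  using hom[of 0 y 0 1] zE by simp
lemma fsum: "x \<in> E \<Longrightarrow> y \<in> D \<Longrightarrow> f (x + y) = g1 x + g2 y"
  using hom[of x y 1 1] by simp
lemma g1_0: "g1 0 = 0" using g1sc[of 0 0] zE by simp
lemma g2_0: "g2 0 = 0" using g2add[of 0 0] zD by simp

lemma Hmem: "z \<in> dsum E D \<longleftrightarrow> (\<exists>a b. a \<in> E \<and> b \<in> D \<and> z = a + b)"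
  unfolding dsum_def by auto
lemma Kmem: "z \<in> dsum E' D' \<longleftrightarrow> (\<exists>a b. a \<in> E' \<and> b \<in> D' \<and> z = a + b)"
  unfolding dsum_def by auto

lemma H_sub: "add_subgroup (dsum E D)"
  unfolding add_subgroup_def
proof (intro conjI ballI)
  have "0 = 0 + (0::'a)" by simp
  then show "0 \<in> dsum E D" using zE zD unfolding Hmem by blast
next
  fix x y assume "x \<in> dsum E D" "y \<in> dsum E D"
  then obtain a b a' b' where "a \<in> E" "b \<in> D" "x = a + b" "a' \<in> E" "b' \<in> D" "y = a' + b'" by (auto simp: Hmem)
  moreover have "x + y = (a + a') + (b + b')" using calculation by (simp add: algebra_simps)
  moreover have "a + a' \<in> E" using calculation sE by (simp add: subspace_add)
  moreover have "b + b' \<in> D" using calculation gD by (simp add: add_subgroup_def)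
  ultimately show "x + y \<in> dsum E D" unfolding Hmem by blast
next
  fix x assume "x \<in> dsum E D"
  then obtain a b where "a \<in> E" "b \<in> D" "x = a + b" by (auto simp: Hmem)
  moreover have "- x = (- a) + (- b)" using calculation by simp
  moreover have "- a \<in> E" using calculation sE by (simp add: subspace_neg)
  moreover have "- b \<in> D" using calculation gD by (simp add: add_subgroup_def)
  ultimately show "- x \<in> dsum E D" unfolding Hmem by blast
qed

lemma E_sub_H: "E \<subseteq> dsum E D"
proof
  fix x assume "x \<in> E" then show "x \<in> dsum E D" using zD unfolding Hmem by (intro exI[of _ x] exI[of _ 0]) simp
qed
lemma D_sub_H: "D \<subseteq> dsum E D"
proof
  fix x assume "x \<in> D" then show "x \<in> dsum E D" using zE unfolding Hmem by (intro exI[of _ 0] exI[of _ x]) simp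
qed

lemma fadd: "u \<in> dsum E D \<Longrightarrow> v \<in> dsum E D \<Longrightarrow> f (u + v) = f u + f v"
proof -
  assume "u \<in> dsum E D" "v \<in> dsum E D"
  then obtain a b a' b' where ab: "a \<in> E" "b \<in> D" "u = a + b" "a' \<in> E" "b' \<in> D" "v = a' + b'" by (auto simp: Hmem)
  have "u + v = (a + a') + (b + b')" using ab by (simp add: algebra_simps)
  moreover have "a + a' \<in> E" using ab sE by (simp add: subspace_add)
  moreover have "b + b' \<in> D" using ab gD by (simp add: add_subgroup_def)
  ultimately have "f (u + v) = g1 (a + a') + g2 (b + b')" using fsum by simp
  also have "\<dots> = f u + f v" using ab g1add g2add fsum by simp
  finally show ?thesis .
qed

lemma fdiff: "u \<in> dsum E D \<Longrightarrow> v \<in> dsum E D \<Longrightarrow> f (u - v) = f u - f v"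
proof -
  assume uv: "u \<in> dsum E D" "v \<in> dsum E D"
  then have "u - v \<in> dsum E D" using add_subgroup_diff[OF H_sub] by blast
  then have "f ((u - v) + v) = f (u - v) + f v" using fadd uv by blast
  then show ?thesis by simp
qed

lemma f0: "f 0 = 0" using fE[OF zE] g1_0 by simp

lemma fint: "y \<in> dsum E D \<Longrightarrow> f (of_int p *\<^sub>R y) = of_int p *\<^sub>R f y"
proof -
  assume "y \<in> dsum E D"
  then obtain a b where ab: "a \<in> E" "b \<in> D" "y = a + b" by (auto simp: Hmem)
  have "of_int p *\<^sub>R y = (of_int p :: real) *\<^sub>R a + of_int p *\<^sub>R b" using ab by (simp add: scaleR_right_distrib)
  then have "f (of_int p *\<^sub>R y) = of_int p *\<^sub>R g1 a + of_int p *\<^sub>R g2 b" using hom ab by simp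
  also have "\<dots> = of_int p *\<^sub>R f y" using fsum ab by (simp add: scaleR_right_distrib)
  finally show ?thesis .
qed

lemma fscE: "x \<in> E \<Longrightarrow> f (c *\<^sub>R x) = c *\<^sub>R f x"
  using fE g1sc sE by (simp add: subspace_scale)

lemma fHK: "z \<in> dsum E D \<Longrightarrow> f z \<in> dsum E' D'"
proof -
  assume "z \<in> dsum E D"
  then obtain a b where ab: "a \<in> E" "b \<in> D" "z = a + b" by (auto simp: Hmem)
  then have "f z = g1 a + g2 b" using fsum by simp
  then show ?thesis unfolding Kmem using g1E g2D ab by blast
qed

lemma maxsub:
  assumes "subspace V" "V \<subseteq> dsum E D" shows "V \<subseteq> E"
  by (rule maxsub_gen[OF sE gD discD iD assms])

lemma part1:
  assumes Kc: "closed (dsum E' D')" and inj: "inj_on f (dsum E D)"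
  shows "\<exists>E'' D''. closed_add_subgroup (f ` dsum E D) \<and> closed_decomp (f ` dsum E D) E'' D''
                \<and> closed_iso E D E'' D'' f"
proof -
  define E2 where "E2 = g1 ` E"
  define D2 where "D2 = g2 ` D"
  have img: "f ` dsum E D = dsum E2 D2"
  proof
    show "f ` dsum E D \<subseteq> dsum E2 D2"
    proof
      fix y assume "y \<in> f ` dsum E D"
      then obtain z where "z \<in> dsum E D" "y = f z" by blast
      then obtain a b where ab: "a \<in> E" "b \<in> D" "y = f (a + b)" unfolding Hmem by blast
      then have "y = g1 a + g2 b" using fsum by simp
      then show "y \<in> dsum E2 D2" unfolding dsum_def E2_def D2_def using ab by blast
    qed
  next
    show "dsum E2 D2 \<subseteq> f ` dsum E D"
    proof
      fix y assume "y \<in> dsum E2 D2"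
      then obtain a b where ab: "a \<in> E" "b \<in> D" "y = g1 a + g2 b" unfolding dsum_def E2_def D2_def by blast
      then have "y = f (a + b)" using fsum by simp
      moreover have "a + b \<in> dsum E D" unfolding Hmem using ab by blast
      ultimately show "y \<in> f ` dsum E D" by blast
    qed
  qed
  have sE2: "subspace E2" unfolding subspace_def E2_def
  proof (intro conjI ballI allI)
    show "0 \<in> g1 ` E" using g1_0 zE by (metis image_eqI)
  next
    fix x y assume "x \<in> g1 ` E" "y \<in> g1 ` E"
    then obtain a b where "a \<in> E" "b \<in> E" "x = g1 a" "y = g1 b" by blast
    moreover have "a + b \<in> E" using calculation sE by (simp add: subspace_add)
    ultimately show "x + y \<in> g1 ` E" using g1add by (metis image_eqI)
  next
    fix c x assume "x \<in> g1 ` E"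
    then obtain a where "a \<in> E" "x = g1 a" by blast
    moreover have "c *\<^sub>R a \<in> E" using calculation sE by (simp add: subspace_scale)
    ultimately show "c *\<^sub>R x \<in> g1 ` E" using g1sc by (metis image_eqI)
  qed
  have gD2: "add_subgroup D2" unfolding add_subgroup_def D2_def
  proof (intro conjI ballI)
    show "0 \<in> g2 ` D" using g2_0 zD by (metis image_eqI)
  next
    fix x y assume "x \<in> g2 ` D" "y \<in> g2 ` D"
    then obtain a b where "a \<in> D" "b \<in> D" "x = g2 a" "y = g2 b" by blast
    moreover have "a + b \<in> D" using calculation gD by (simp add: add_subgroup_def)
    ultimately show "x + y \<in> g2 ` D" using g2add by (metis image_eqI)
  next
    fix x assume "x \<in> g2 ` D"
    then obtain a where a: "a \<in> D" "x = g2 a" by blast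
    have na: "- a \<in> D" using a gD by (simp add: add_subgroup_def)
    have "g2 (a + - a) = g2 a + g2 (- a)" using g2add a na by blast
    then have "g2 a + g2 (- a) = 0" using g2_0 by simp
    then have "- g2 a = g2 (- a)" by (simp only: neg_eq_iff_add_eq_0)
    then have "g2 (- a) = - x" using a by simp
    then show "- x \<in> g2 ` D" using na by (metis image_eqI)
  qed
  have D2D': "D2 \<subseteq> D'" unfolding D2_def using g2D by blast
  have E2E': "E2 \<subseteq> E'" unfolding E2_def using g1E by blast
  have discD2: "discrete D2" using discrete_subset[OF discD' D2D'] .
  have iD2: "E2 \<inter> span D2 = {0}"
  proof -
    have "span D2 \<subseteq> span D'" using D2D' by (rule span_mono)
    moreover have "0 \<in> E2" using sE2 by (simp add: subspace_0)
    moreover have "0 \<in> span D2" by (simp add: span_zero)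
    ultimately show ?thesis using iD' E2E' by blast
  qed
  obtain P where P: "linear P" "\<And>e s. e \<in> E' \<Longrightarrow> s \<in> span D' \<Longrightarrow> P (e + s) = s"
    using proj_exists[OF sE' subspace_span iD'] by blast
  have bP: "bounded_linear P" using P(1) linear_conv_bounded_linear by blast
  have cP: "continuous (at x) P" for x using linear_continuous_at[OF bP] by blast
  have cQ: "continuous (at x) (\<lambda>k. k - P k)" for x using cP by (auto intro!: continuous_intros)
  have eq: "dsum E2 D2 = dsum E' D' \<inter> (\<lambda>k. k - P k) -` E2 \<inter> P -` D2"
  proof
    show "dsum E2 D2 \<subseteq> dsum E' D' \<inter> (\<lambda>k. k - P k) -` E2 \<inter> P -` D2"
    proof
      fix k assume "k \<in> dsum E2 D2"
      then obtain a b where ab: "a \<in> E2" "b \<in> D2" "k = a + b" unfolding dsum_def by blast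
      have "a \<in> E'" "b \<in> D'" using ab E2E' D2D' by auto
      moreover have "b \<in> span D'" using \<open>b \<in> D'\<close> by (rule span_base)
      ultimately have "P k = b" using P(2) ab by simp
      then show "k \<in> dsum E' D' \<inter> (\<lambda>k. k - P k) -` E2 \<inter> P -` D2"
        using ab \<open>a \<in> E'\<close> \<open>b \<in> D'\<close> unfolding dsum_def by auto
    qed
  next
    show "dsum E' D' \<inter> (\<lambda>k. k - P k) -` E2 \<inter> P -` D2 \<subseteq> dsum E2 D2"
    proof
      fix k assume k: "k \<in> dsum E' D' \<inter> (\<lambda>k. k - P k) -` E2 \<inter> P -` D2"
      then obtain a b where ab: "a \<in> E'" "b \<in> D'" "k = a + b" unfolding dsum_def by blast
      have "b \<in> span D'" using \<open>b \<in> D'\<close> by (rule span_base)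
      then have "P k = b" using P(2) ab by simp
      then have "a \<in> E2" "b \<in> D2" using k ab by auto
      then show "k \<in> dsum E2 D2" using ab unfolding dsum_def by blast
    qed
  qed
  obtain eps where eps: "eps > 0" "\<And>x y. x \<in> D' \<Longrightarrow> y \<in> D' \<Longrightarrow> dist x y < eps \<Longrightarrow> x = y"
    using disc_unif[OF gD' discD'] by blast
  have cD2: "closed D2"
    by (rule discrete_imp_closed[OF eps(1)]) (use eps(2) D2D' in blast)
  have cE2: "closed E2" using sE2 by (rule closed_subspace)
  have closedimg: "closed (dsum E2 D2)"
    unfolding eq
    by (intro closed_Int Kc continuous_closed_vimage cE2 cD2 cP cQ)
  have cas: "closed_add_subgroup (f ` dsum E D)"
    unfolding img closed_add_subgroup_def using closedimg dsum_sub[OF sE2 gD2] by blast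
  have cd: "closed_decomp (f ` dsum E D) E2 D2"
    unfolding closed_decomp_def img using sE2 gD2 discD2 iD2 by blast
  have hom1: "closed_hom E D E2 D2 f"
    unfolding closed_hom_def
    by (rule exI[of _ g1], rule exI[of _ g2]) (auto simp: E2_def D2_def g1add g1sc g2add hom)
  define h where "h = inv_into (dsum E D) f"
  have hf: "h (f a) = a" if "a \<in> dsum E D" for a
    unfolding h_def using inv_into_f_f[OF inj that] .
  have hE: "h (g1 a) = a" if "a \<in> E" for a using hf fE that E_sub_H by force
  have hD: "h (g2 a) = a" if "a \<in> D" for a using hf fD that D_sub_H by force
  have hom2: "closed_hom E2 D2 E D h"
    unfolding closed_hom_def
  proof (rule exI[of _ h], rule exI[of _ h], intro conjI ballI allI impI)
    fix x assume "x \<in> E2" then show "h x \<in> E" unfolding E2_def using hE by auto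
  next
    fix x y assume "x \<in> E2" "y \<in> E2"
    then obtain a b where ab: "a \<in> E" "b \<in> E" "x = g1 a" "y = g1 b" unfolding E2_def by blast
    have "a + b \<in> E" using ab sE by (simp add: subspace_add)
    then show "h (x + y) = h x + h y" using ab hE g1add by metis
  next
    fix x y and c :: real assume "x \<in> E2" "y \<in> E2"
    then obtain a where ab: "a \<in> E" "x = g1 a" unfolding E2_def by blast
    have "c *\<^sub>R a \<in> E" using ab sE by (simp add: subspace_scale)
    then show "h (c *\<^sub>R x) = c *\<^sub>R h x" using ab hE g1sc by metis
  next
    fix y assume "y \<in> D2" then show "h y \<in> D" unfolding D2_def using hD by auto
  next
    fix x y assume "x \<in> D2" "y \<in> D2"
    then obtain a b where ab: "a \<in> D" "b \<in> D" "x = g2 a" "y = g2 b" unfolding D2_def by blast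
    have "a + b \<in> D" using ab gD by (simp add: add_subgroup_def)
    then show "h (x + y) = h x + h y" using ab hD g2add by metis
  next
    fix c :: real and x and p :: int and y assume "x \<in> E2" "y \<in> D2"
    then obtain a b where ab: "a \<in> E" "b \<in> D" "x = g1 a" "y = g2 b" unfolding E2_def D2_def by blast
    have "c *\<^sub>R a \<in> E" using ab sE by (simp add: subspace_scale)
    moreover have "of_int p *\<^sub>R b \<in> D" using ab gD by (simp add: add_subgroup_int_mult)
    ultimately have mem: "c *\<^sub>R a + of_int p *\<^sub>R b \<in> dsum E D" unfolding Hmem by blast
    have "c *\<^sub>R x + of_int p *\<^sub>R y = f (c *\<^sub>R a + of_int p *\<^sub>R b)" using hom ab by simp
    then have "h (c *\<^sub>R x + of_int p *\<^sub>R y) = c *\<^sub>R a + of_int p *\<^sub>R b" using hf mem by simp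
    then show "h (c *\<^sub>R x + of_int p *\<^sub>R y) = c *\<^sub>R h x + of_int p *\<^sub>R h y" using ab hE hD by simp
  qed
  have inv2: "f (h y) = y" if "y \<in> dsum E2 D2" for y
    using that img f_inv_into_f[of y f "dsum E D"] unfolding h_def by auto
  have iso: "closed_iso E D E2 D2 f"
    unfolding closed_iso_def using hom1 hom2 hf inv2 by blast
  show ?thesis using cas cd iso by blast
qed

lemma part2:
  assumes surj: "f ` dsum E D = dsum E' D'" and Fc: "closed_add_subgroup F"
    and sup: "supplement_defect0 F (kernel_on (dsum E D) f) (dsum E D)"
  shows "(\<exists>EF DF. closed_decomp F EF DF \<and> closed_iso EF DF E' D' f)
         \<and> Re (cdim (dsum E' D')) = Re (cdim (dsum E D)) - Re (cdim (kernel_on (dsum E D) f))"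
proof -
  have FH: "F \<subseteq> dsum E D" and FN: "dsum F (kernel_on (dsum E D) f) = dsum E D"
    and cd0: "Re (cdim (F \<inter> kernel_on (dsum E D) f)) = 0" "Im (cdim (F \<inter> kernel_on (dsum E D) f)) = 0"
    using sup unfolding supplement_defect0_def by auto
  have cF: "closed F" and gF: "add_subgroup F" using Fc unfolding closed_add_subgroup_def by auto
  have zF: "0 \<in> F" using gF by (simp add: add_subgroup_def)
  have FN0: "F \<inter> kernel_on (dsum E D) f \<subseteq> {0}" using cdim_zero[OF cd0] .
  have Nmem: "z \<in> kernel_on (dsum E D) f \<longleftrightarrow> z \<in> dsum E D \<and> f z = 0" for z
    unfolding kernel_on_def by simp
  have kill: "z = 0" if "z \<in> F" "f z = 0" for z
  proof -
    have "z \<in> F \<inter> kernel_on (dsum E D) f" using that FH Nmem by auto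
    then show ?thesis using FN0 by auto
  qed
  have injF: "inj_on f F"
  proof (rule inj_onI)
    fix u v assume uv: "u \<in> F" "v \<in> F" "f u = f v"
    have "u - v \<in> F" using add_subgroup_diff[OF gF] uv by blast
    moreover have "f (u - v) = f u - f v" using fdiff uv FH by blast
    then have "f (u - v) = 0" using uv by simp
    ultimately have "u - v = 0" using kill by blast
    then show "u = v" by simp
  qed
  have fF: "f ` F = dsum E' D'"
  proof
    show "f ` F \<subseteq> dsum E' D'" using FH surj by blast
    show "dsum E' D' \<subseteq> f ` F"
    proof
      fix k assume "k \<in> dsum E' D'"
      then have "k \<in> f ` dsum E D" using surj by simp
      then obtain z where z: "z \<in> dsum E D" "k = f z" by blast
      then obtain a n where an: "a \<in> F" "n \<in> kernel_on (dsum E D) f" "z = a + n"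
        using FN unfolding dsum_def by blast
      have "f z = f a + f n" using fadd an FH Nmem by auto
      then have "k = f a" using an z Nmem by simp
      then show "k \<in> f ` F" using an by blast
    qed
  qed
  have preK: "\<exists>u\<in>F. f u = k" if "k \<in> dsum E' D'" for k using fF that by (metis imageE)
  have E'K: "E' \<subseteq> dsum E' D'"
  proof
    fix x assume "x \<in> E'" then show "x \<in> dsum E' D'" using zD' unfolding Kmem by (intro exI[of _ x] exI[of _ 0]) simp
  qed
  have D'K: "D' \<subseteq> dsum E' D'"
  proof
    fix x assume "x \<in> D'" then show "x \<in> dsum E' D'" using zE' unfolding Kmem by (intro exI[of _ 0] exI[of _ x]) simp
  qed
  define EF where "EF = {z\<in>F. f z \<in> E'}"
  define DF where "DF = {z\<in>F. f z \<in> D'}"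
  have EFF: "EF \<subseteq> F" and DFF: "DF \<subseteq> F" unfolding EF_def DF_def by auto
  have inv_mult: "\<exists>w\<in>EF. of_nat m *\<^sub>R w = z" if zz: "z \<in> EF" "m > 0" for z m
  proof -
    have "(1 / of_nat m) *\<^sub>R f z \<in> E'" using zz sE' unfolding EF_def by (simp add: subspace_scale)
    moreover then obtain w where w: "w \<in> F" "f w = (1 / of_nat m) *\<^sub>R f z" using preK E'K by blast
    ultimately have wE: "w \<in> EF" unfolding EF_def by simp
    have "f (of_int (int m) *\<^sub>R w) = of_int (int m) *\<^sub>R f w" using fint w FH by blast
    then have "f (of_nat m *\<^sub>R w) = f z" using w zz(2) by simp
    moreover have "of_nat m *\<^sub>R w \<in> F" using add_subgroup_nat_mult[OF gF w(1)] .
    moreover have "z \<in> F" using zz EFF by blast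
    ultimately have "of_nat m *\<^sub>R w = z" using inj_onD[OF injF] by blast
    then show ?thesis using wE by blast
  qed
  have EFE: "EF \<subseteq> E"
  proof
    fix z assume zEF: "z \<in> EF"
    then have "z \<in> dsum E D" using EFF FH by auto
    then obtain a b where ab: "a \<in> E" "b \<in> D" "z = a + b" unfolding Hmem by blast
    obtain eps where eps: "eps > 0" "\<And>x. x \<in> D \<Longrightarrow> norm x < eps \<Longrightarrow> x = 0"
      using disc0[OF gD discD] by blast
    have bm: "(1 / of_nat m) *\<^sub>R b \<in> D" if mp: "m > 0" for m
    proof -
      obtain w where w: "w \<in> EF" "of_nat m *\<^sub>R w = z" using inv_mult[OF zEF mp] by blast
      then have "w \<in> dsum E D" using EFF FH by auto
      then obtain a' b' where ab': "a' \<in> E" "b' \<in> D" "w = a' + b'" unfolding Hmem by blast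
      have "a + b = of_nat m *\<^sub>R a' + of_nat m *\<^sub>R b'" using w ab' ab by (simp add: scaleR_right_distrib)
      moreover have "of_nat m *\<^sub>R a' \<in> E" using ab' sE by (simp add: subspace_scale)
      moreover have "of_nat m *\<^sub>R b' \<in> span D" using ab' by (simp add: span_base span_scale)
      moreover have "b \<in> span D" using ab by (simp add: span_base)
      ultimately have "b = of_nat m *\<^sub>R b'"
        using decomp_unique[OF iD sE subspace_span, of a "of_nat m *\<^sub>R a'" b "of_nat m *\<^sub>R b'"] ab by blast
      then show ?thesis using mp ab' by simp
    qed
    have "b = 0"
    proof (rule ccontr)
      assume bn: "b \<noteq> 0"
      obtain m :: nat where m: "norm b / eps < of_nat m" using reals_Archimedean2 by blast
      have "0 < norm b / eps" using bn eps by simp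
      then have "(0::real) < of_nat m" using m by linarith
      then have mpos: "m > 0" by simp
      have nb: "norm b < of_nat m * eps" using m eps by (simp add: divide_less_eq)
      have "norm ((1 / of_nat m) *\<^sub>R b) = norm b / of_nat m" by simp
      also have "\<dots> < eps" using nb mpos by (simp add: divide_less_eq mult.commute)
      finally have "(1 / of_nat m) *\<^sub>R b = 0" using eps(2) bm[OF mpos] by blast
      then show False using bn mpos by simp
    qed
    then show "z \<in> E" using ab by simp
  qed
  have f_EF: "f (c *\<^sub>R z) = c *\<^sub>R f z" if "z \<in> EF" for z c using fscE that EFE by blast
  have sEF: "subspace EF" unfolding subspace_def
  proof (intro conjI ballI allI)
    show "0 \<in> EF" unfolding EF_def using zF f0 zE' by simp
  next
    fix u v assume uv: "u \<in> EF" "v \<in> EF"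
    have "u + v \<in> F" using uv EFF gF unfolding add_subgroup_def by blast
    moreover have "f (u + v) = f u + f v" using fadd uv EFF FH by blast
    moreover have "f u + f v \<in> E'" using uv sE' unfolding EF_def by (simp add: subspace_add)
    ultimately show "u + v \<in> EF" unfolding EF_def by simp
  next
    fix c :: real and z assume zEF: "z \<in> EF"
    have Q: "t *\<^sub>R z \<in> F" if tQ: "t \<in> \<rat>" for t
    proof -
      obtain a b :: int where ab: "b > 0" "t = of_int a / of_int b" using Rats_cases'[OF tQ] by metis
      define m where "m = nat b"
      have mpos: "m > 0" and mb: "(of_nat m :: real) = of_int b" using ab by (auto simp: m_def)
      obtain w where w: "w \<in> EF" "of_nat m *\<^sub>R w = z" using inv_mult[OF zEF mpos] by blast
      have "t *\<^sub>R z = of_int a *\<^sub>R w"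
        using w(2)[symmetric] ab mpos mb by (simp add: scaleR_scaleR)
      moreover have "of_int a *\<^sub>R w \<in> F" using add_subgroup_int_mult[OF gF] w EFF by blast
      ultimately show ?thesis by simp
    qed
    have cl: "closed ((\<lambda>t. t *\<^sub>R z) -` F)"
      by (rule continuous_closed_vimage[OF cF]) (auto intro!: continuous_intros)
    have "closure \<rat> \<subseteq> (\<lambda>t. t *\<^sub>R z) -` F" using Q cl by (intro closure_minimal) auto
    then have "c *\<^sub>R z \<in> F" using Rats_closure_real by auto
    moreover have "f (c *\<^sub>R z) \<in> E'" using f_EF[OF zEF] zEF sE' unfolding EF_def by (simp add: subspace_scale)
    ultimately show "c *\<^sub>R z \<in> EF" unfolding EF_def by simp
  qed
  have fneg: "f (- u) = - f u" if "u \<in> dsum E D" for u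
    using fdiff[OF _ that, of 0] H_sub f0 unfolding add_subgroup_def by simp
  have gDF: "add_subgroup DF" unfolding add_subgroup_def
  proof (intro conjI ballI)
    show "0 \<in> DF" unfolding DF_def using zF f0 zD' by simp
  next
    fix u v assume uv: "u \<in> DF" "v \<in> DF"
    have "u + v \<in> F" using uv DFF gF unfolding add_subgroup_def by blast
    moreover have "f (u + v) = f u + f v" using fadd uv DFF FH by blast
    moreover have "f u + f v \<in> D'" using uv gD' unfolding DF_def add_subgroup_def by simp
    ultimately show "u + v \<in> DF" unfolding DF_def by simp
  next
    fix u assume u: "u \<in> DF"
    have "- u \<in> F" using u DFF gF unfolding add_subgroup_def by blast
    moreover have "f (- u) = - f u" using fneg u DFF FH by blast
    moreover have "- f u \<in> D'" using u gD' unfolding DF_def add_subgroup_def by simp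
    ultimately show "- u \<in> DF" unfolding DF_def by simp
  qed
  have Fsum: "F = dsum EF DF"
  proof
    show "F \<subseteq> dsum EF DF"
    proof
      fix z assume z: "z \<in> F"
      then have "f z \<in> dsum E' D'" using fF by blast
      then obtain e d where ed: "e \<in> E'" "d \<in> D'" "f z = e + d" unfolding Kmem by blast
      obtain u where u: "u \<in> F" "f u = e" using preK E'K ed by blast
      obtain v where v: "v \<in> F" "f v = d" using preK D'K ed by blast
      have "u + v \<in> F" using u v gF unfolding add_subgroup_def by blast
      moreover have "f (u + v) = f z" using fadd u v FH ed by auto
      ultimately have "u + v = z" using inj_onD[OF injF] z by blast
      moreover have "u \<in> EF" "v \<in> DF" using u v ed unfolding EF_def DF_def by auto
      ultimately show "z \<in> dsum EF DF" unfolding dsum_def by blast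
    qed
  next
    show "dsum EF DF \<subseteq> F" unfolding dsum_def using EFF DFF gF unfolding add_subgroup_def by blast
  qed
  obtain P where P: "linear P" "\<And>e s. e \<in> E \<Longrightarrow> s \<in> span D \<Longrightarrow> P (e + s) = s"
    using proj_exists[OF sE subspace_span iD] by blast
  have Pab: "P (a + b) = b" if "a \<in> E" "b \<in> D" for a b using P(2) that span_base by blast
  have discDF: "discrete DF"
  proof -
    obtain eps where eps: "eps > 0" "\<And>x. x \<in> D \<Longrightarrow> norm x < eps \<Longrightarrow> x = 0"
      using disc0[OF gD discD] by blast
    obtain C where C: "C > 0" "\<And>x. norm (P x) \<le> C * norm x" using linear_bounded_pos[OF P(1)] by blast
    have "uniform_discrete DF"
    proof (rule uniformI1)
      show "eps / C > 0" using eps C by simp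
    next
      fix x y assume xy: "x \<in> DF" "y \<in> DF" "dist x y < eps / C"
      define z where "z = x - y"
      have zDF: "z \<in> DF" unfolding z_def using add_subgroup_diff[OF gDF] xy by blast
      then have "z \<in> dsum E D" using DFF FH by auto
      then obtain a b where ab: "a \<in> E" "b \<in> D" "z = a + b" unfolding Hmem by blast
      have "norm b \<le> C * norm z" using C(2)[of z] Pab ab by simp
      also have "\<dots> < C * (eps / C)" using xy C by (intro mult_strict_left_mono) (simp_all add: z_def dist_norm)
      also have "\<dots> = eps" using C by simp
      finally have "b = 0" using eps(2) ab by blast
      then have "f z = g1 a" using fE ab by simp
      then have "f z \<in> E'" using g1E ab by simp
      moreover have "f z \<in> D'" using zDF unfolding DF_def by simp
      ultimately have "f z = 0" using iD'' by blast
      then have "z = 0" using kill zDF DFF by blast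
      then show "x = y" unfolding z_def by simp
    qed
    then show ?thesis by (rule uniform_discrete_imp_discrete)
  qed
  define N1 where "N1 = {a \<in> E. g1 a = 0}"
  have sN1: "subspace N1" unfolding subspace_def N1_def
  proof (intro conjI ballI allI)
    show "0 \<in> {a \<in> E. g1 a = 0}" using zE g1_0 by simp
  next
    fix x y assume "x \<in> {a \<in> E. g1 a = 0}" "y \<in> {a \<in> E. g1 a = 0}"
    then show "x + y \<in> {a \<in> E. g1 a = 0}" using g1add sE by (simp add: subspace_add)
  next
    fix c :: real and x assume "x \<in> {a \<in> E. g1 a = 0}"
    then show "c *\<^sub>R x \<in> {a \<in> E. g1 a = 0}" using g1sc sE by (simp add: subspace_scale)
  qed
  have N1ker: "x = 0" if "x \<in> N1" "x \<in> F" for x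
    using kill that fE unfolding N1_def by auto
  have iEF: "EF \<inter> span DF = {0}"
  proof -
    have key: "x - P x \<in> N1" if "x \<in> span DF" for x
      using that
    proof (induction rule: span_induct)
      case base
      show ?case unfolding subspace_def
      proof (intro conjI ballI allI)
        show "0 \<in> {x. x - P x \<in> N1}" using sN1 P(1) by (simp add: subspace_0 linear_0)
      next
        fix x y assume "x \<in> {x. x - P x \<in> N1}" "y \<in> {x. x - P x \<in> N1}"
        then have e1: "(x - P x) + (y - P y) \<in> N1" using sN1 by (simp add: subspace_add)
        have e2: "(x + y) - P (x + y) = (x - P x) + (y - P y)" using P(1) by (simp add: linear_add)
        show "x + y \<in> {x. x - P x \<in> N1}" unfolding mem_Collect_eq e2 by (rule e1)
      next
        fix c :: real and x assume "x \<in> {x. x - P x \<in> N1}"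
        then have e1: "c *\<^sub>R (x - P x) \<in> N1" using sN1 by (simp add: subspace_scale)
        have e2: "c *\<^sub>R x - P (c *\<^sub>R x) = c *\<^sub>R (x - P x)" using P(1) by (simp add: linear_scale scaleR_right_diff_distrib)
        show "c *\<^sub>R x \<in> {x. x - P x \<in> N1}" unfolding mem_Collect_eq e2 by (rule e1)
      qed
    next
      case (step z)
      then have "z \<in> dsum E D" using DFF FH by auto
      then obtain a b where ab: "a \<in> E" "b \<in> D" "z = a + b" unfolding Hmem by blast
      have "z - P z = a" using Pab ab by simp
      have fz: "f z = g1 a + g2 b" using fsum ab by simp
      have "f z \<in> D'" using step unfolding DF_def by simp
      then have "f z - g2 b \<in> D'" using add_subgroup_diff[OF gD'] g2D ab by blast
      then have "g1 a \<in> D'" using fz by simp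
      moreover have "g1 a \<in> E'" using g1E ab by simp
      ultimately have "g1 a = 0" using iD'' by blast
      then show ?case using \<open>z - P z = a\<close> ab unfolding N1_def by simp
    qed
    show ?thesis
    proof
      show "EF \<inter> span DF \<subseteq> {0}"
      proof
        fix x assume x: "x \<in> EF \<inter> span DF"
        then have "x \<in> E" using EFE by blast
        then have "P x = 0" using P(2)[of x 0] by (simp add: span_zero)
        then have "x \<in> N1" using key[of x] x by simp
        then show "x \<in> {0}" using N1ker x EFF by blast
      qed
      show "{0} \<subseteq> EF \<inter> span DF" using sEF by (simp add: subspace_0 span_zero)
    qed
  qed
  have cdF: "closed_decomp F EF DF"
    unfolding closed_decomp_def using sEF gDF discDF iEF Fsum by blast
  have fmix: "f (c *\<^sub>R x + of_int p *\<^sub>R y) = c *\<^sub>R f x + of_int p *\<^sub>R f y" if "x \<in> EF" "y \<in> F" for c x p y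
  proof -
    have "x \<in> E" using that EFE by blast
    then have "c *\<^sub>R x \<in> E" using sE by (simp add: subspace_scale)
    then have "c *\<^sub>R x \<in> dsum E D" using E_sub_H by blast
    moreover have "of_int p *\<^sub>R y \<in> dsum E D" using add_subgroup_int_mult[OF H_sub] that FH by blast
    ultimately have "f (c *\<^sub>R x + of_int p *\<^sub>R y) = f (c *\<^sub>R x) + f (of_int p *\<^sub>R y)" using fadd by blast
    then show ?thesis using f_EF[OF that(1)] fint that FH by auto
  qed
  have hom1: "closed_hom EF DF E' D' f"
    unfolding closed_hom_def
  proof (rule exI[of _ f], rule exI[of _ f], intro conjI ballI allI impI)
    fix x assume "x \<in> EF" then show "f x \<in> E'" unfolding EF_def by simp
  next
    fix x y assume "x \<in> EF" "y \<in> EF" then show "f (x + y) = f x + f y" using fadd EFF FH by blast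
  next
    fix x y and c :: real assume "x \<in> EF" "y \<in> EF" then show "f (c *\<^sub>R x) = c *\<^sub>R f x" using f_EF by blast
  next
    fix x assume "x \<in> DF" then show "f x \<in> D'" unfolding DF_def by simp
  next
    fix x y assume "x \<in> DF" "y \<in> DF" then show "f (x + y) = f x + f y" using fadd DFF FH by blast
  next
    fix c :: real and x and p :: int and y assume "x \<in> EF" "y \<in> DF"
    then show "f (c *\<^sub>R x + of_int p *\<^sub>R y) = c *\<^sub>R f x + of_int p *\<^sub>R f y" using fmix DFF by blast
  qed
  define h where "h = inv_into F f"
  have hf: "h (f u) = u" if "u \<in> F" for u unfolding h_def using inv_into_f_f[OF injF that] .
  have hK: "h k \<in> F \<and> f (h k) = k" if "k \<in> dsum E' D'" for k
    using that fF unfolding h_def by (metis inv_into_into f_inv_into_f)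
  have hI: "h k = u" if "u \<in> F" "f u = k" for u k using hf that by blast
  have hE': "h x \<in> EF" if "x \<in> E'" for x using hK[of x] that E'K unfolding EF_def by auto
  have hD': "h x \<in> DF" if "x \<in> D'" for x using hK[of x] that D'K unfolding DF_def by auto
  have hom2: "closed_hom E' D' EF DF h"
    unfolding closed_hom_def
  proof (rule exI[of _ h], rule exI[of _ h], intro conjI ballI allI impI)
    fix x assume "x \<in> E'" then show "h x \<in> EF" by (rule hE')
  next
    fix x y assume xy: "x \<in> E'" "y \<in> E'"
    have "h x + h y \<in> F" using hE' xy EFF gF unfolding add_subgroup_def by blast
    moreover have "f (h x + h y) = x + y" using fadd hE' xy EFF FH hK E'K by (metis subsetD)
    ultimately show "h (x + y) = h x + h y" using hI by blast
  next
    fix x y and c :: real assume xy: "x \<in> E'" "y \<in> E'"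
    have "c *\<^sub>R h x \<in> EF" using hE' xy sEF by (simp add: subspace_scale)
    moreover have "f (c *\<^sub>R h x) = c *\<^sub>R x" using f_EF hE' xy hK E'K by (metis subsetD)
    ultimately show "h (c *\<^sub>R x) = c *\<^sub>R h x" using hI EFF by blast
  next
    fix x assume "x \<in> D'" then show "h x \<in> DF" by (rule hD')
  next
    fix x y assume xy: "x \<in> D'" "y \<in> D'"
    have "h x + h y \<in> F" using hD' xy DFF gF unfolding add_subgroup_def by blast
    moreover have "f (h x + h y) = x + y" using fadd hD' xy DFF FH hK D'K by (metis subsetD)
    ultimately show "h (x + y) = h x + h y" using hI by blast
  next
    fix c :: real and x and p :: int and y assume xy: "x \<in> E'" "y \<in> D'"
    have m1: "c *\<^sub>R h x \<in> F" using hE' xy sEF EFF by (auto simp: subspace_scale)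
    have m2: "of_int p *\<^sub>R h y \<in> F" using add_subgroup_int_mult[OF gF] hD' xy DFF by blast
    have "c *\<^sub>R h x + of_int p *\<^sub>R h y \<in> F" using m1 m2 gF unfolding add_subgroup_def by blast
    moreover have "f (c *\<^sub>R h x + of_int p *\<^sub>R h y) = c *\<^sub>R x + of_int p *\<^sub>R y"
      using fmix[of "h x" "h y" c p] hE' hD' xy DFF hK E'K D'K by (metis subsetD)
    ultimately show "h (c *\<^sub>R x + of_int p *\<^sub>R y) = c *\<^sub>R h x + of_int p *\<^sub>R h y" using hI by blast
  qed
  have iso: "closed_iso EF DF E' D' f"
    unfolding closed_iso_def using hom1 hom2 hf hK Fsum by auto
  have ReH: "Re (cdim (dsum E D)) = real (dim E)"
    by (rule Re_cdim[OF sE E_sub_H]) (rule maxsub)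
  have ReK: "Re (cdim (dsum E' D')) = real (dim E')"
    by (rule Re_cdim[OF sE' E'K]) (rule maxsub_gen[OF sE' gD' discD' iD'])
  have N1N: "N1 \<subseteq> kernel_on (dsum E D) f"
  proof
    fix x assume "x \<in> N1"
    then have "x \<in> E" "g1 x = 0" unfolding N1_def by auto
    then show "x \<in> kernel_on (dsum E D) f" using E_sub_H fE Nmem by auto
  qed
  have ReN: "Re (cdim (kernel_on (dsum E D) f)) = real (dim N1)"
  proof (rule Re_cdim[OF sN1 N1N])
    fix V assume V: "subspace V" "V \<subseteq> kernel_on (dsum E D) f"
    then have "V \<subseteq> dsum E D" using Nmem by blast
    then have "V \<subseteq> E" using maxsub V(1) by blast
    show "V \<subseteq> N1"
    proof
      fix x assume x: "x \<in> V"
      then have "x \<in> E" using \<open>V \<subseteq> E\<close> by blast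
      moreover have "f x = 0" using x V(2) Nmem by blast
      ultimately show "x \<in> N1" using fE unfolding N1_def by simp
    qed
  qed
  have EsumI: "E = {x + y |x y. x \<in> EF \<and> y \<in> N1}"
  proof
    show "E \<subseteq> {x + y |x y. x \<in> EF \<and> y \<in> N1}"
    proof
      fix a assume a: "a \<in> E"
      have "g1 a \<in> dsum E' D'" using g1E a E'K by blast
      then obtain u where u: "u \<in> F" "f u = g1 a" using preK by blast
      have uEF: "u \<in> EF" using u g1E a unfolding EF_def by simp
      then have uE: "u \<in> E" using EFE by blast
      have "a - u \<in> E" using a uE sE by (simp add: subspace_diff)
      moreover have "g1 (a - u) + g1 u = g1 a" using g1add[of "a - u" u] calculation uE by simp
      moreover have "g1 u = g1 a" using u fE uE by simp
      ultimately have "a - u \<in> N1" unfolding N1_def by simp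
      moreover have "a = u + (a - u)" by simp
      ultimately show "a \<in> {x + y |x y. x \<in> EF \<and> y \<in> N1}" using uEF by blast
    qed
    show "{x + y |x y. x \<in> EF \<and> y \<in> N1} \<subseteq> E"
      using EFE sE unfolding N1_def by (auto intro: subspace_add)
  qed
  have IntI: "EF \<inter> N1 \<subseteq> {0}" using N1ker EFF by blast
  have dimE: "dim E = dim EF + dim N1"
  proof -
    have ds: "dim {x + y |x y. x \<in> EF \<and> y \<in> N1} + dim (EF \<inter> N1) = dim EF + dim N1"
      by (rule dim_sums_Int[OF sEF sN1])
    have d0: "dim (EF \<inter> N1) = 0" by (rule iffD2[OF dim_eq_0 IntI])
    have de: "dim E = dim {x + y |x y. x \<in> EF \<and> y \<in> N1}" using EsumI by (rule arg_cong)
    show ?thesis using ds d0 de by linarith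
  qed
  obtain L where L: "linear L" "\<And>x. x \<in> E \<Longrightarrow> L x = g1 x"
    using linear_on_extend[OF sE g1add g1sc] by blast
  have LEF: "L ` EF = E'"
  proof
    show "L ` EF \<subseteq> E'" using L(2) EFE fE unfolding EF_def by auto
    show "E' \<subseteq> L ` EF"
    proof
      fix e assume e: "e \<in> E'"
      then obtain u where u: "u \<in> F" "f u = e" using preK E'K by blast
      then have uEF: "u \<in> EF" using e unfolding EF_def by simp
      then have "L u = e" using L(2) EFE fE u by auto
      then show "e \<in> L ` EF" using uEF by blast
    qed
  qed
  have injL: "inj_on L (span EF)"
  proof -
    have sp: "span EF = EF" using sEF by simp
    have injEF: "inj_on L EF"
    proof (rule inj_onI)
      fix x y assume xy: "x \<in> EF" "y \<in> EF" "L x = L y"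
      then have xyE: "x \<in> E" "y \<in> E" using EFE by auto
      then have "f x = L x" "f y = L y" using L(2) fE by auto
      then have "f x = f y" using xy(3) by simp
      then show "x = y" using inj_onD[OF injF] \<open>x \<in> EF\<close> \<open>y \<in> EF\<close> EFF by blast
    qed
    show ?thesis unfolding sp by (rule injEF)
  qed
  have dimE': "dim E' = dim EF" using dim_image_eq[OF L(1) injL] LEF by simp
  have "Re (cdim (dsum E' D')) = Re (cdim (dsum E D)) - Re (cdim (kernel_on (dsum E D) f))"
    using ReH ReK ReN dimE dimE' by simp
  then show ?thesis using cdF iso by blast
qed

end

theorem proposition4p3:
  fixes H K E D E' D' :: "(real ^ 'n) set" and f :: "real ^ 'n \<Rightarrow> real ^ 'n"
  assumes "closed_add_subgroup H" and "closed_decomp H E D"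
    and "closed_add_subgroup K" and "closed_decomp K E' D'"
    and "closed_hom E D E' D' f"
  shows "(inj_on f H \<longrightarrow>
            (\<exists>E'' D''. closed_add_subgroup (f ` H) \<and> closed_decomp (f ` H) E'' D''
                \<and> closed_iso E D E'' D'' f))
       \<and> (\<forall>F. f ` H = K \<and> closed_add_subgroup F \<and> supplement_defect0 F (kernel_on H f) H \<longrightarrow>
            (\<exists>EF DF. closed_decomp F EF DF \<and> closed_iso EF DF E' D' f)
            \<and> Re (cdim K) = Re (cdim H) - Re (cdim (kernel_on H f)))"
proof -
  obtain g1 g2 where g:
      "\<forall>x\<in>E. g1 x \<in> E'"
      "\<forall>x\<in>E. \<forall>y\<in>E. \<forall>c::real. g1 (x + y) = g1 x + g1 y \<and> g1 (c *\<^sub>R x) = c *\<^sub>R g1 x"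
      "\<forall>y\<in>D. g2 y \<in> D'"
      "\<forall>y\<in>D. \<forall>z\<in>D. g2 (y + z) = g2 y + g2 z"
      "\<forall>(c::real) x (p::int) y. x \<in> E \<longrightarrow> y \<in> D \<longrightarrow>
          f (c *\<^sub>R x + of_int p *\<^sub>R y) = c *\<^sub>R g1 x + of_int p *\<^sub>R g2 y"
    using assms(5) unfolding closed_hom_def by blast
  have dH: "subspace E" "add_subgroup D" "discrete D" "E \<inter> span D = {0}" "H = dsum E D"
    using assms(2) unfolding closed_decomp_def by auto
  have dK: "subspace E'" "add_subgroup D'" "discrete D'" "E' \<inter> span D' = {0}" "K = dsum E' D'"
    using assms(4) unfolding closed_decomp_def by auto
  interpret hs: hsetup E D E' D' f g1 g2
    by unfold_locales (use g dH dK in auto)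
  have Kc: "closed (dsum E' D')" using assms(3) dK(5) unfolding closed_add_subgroup_def by simp
  show ?thesis
  proof (rule conjI)
    show "inj_on f H \<longrightarrow>
            (\<exists>E'' D''. closed_add_subgroup (f ` H) \<and> closed_decomp (f ` H) E'' D''
                \<and> closed_iso E D E'' D'' f)"
    proof
    assume "inj_on f H"
    then show "\<exists>E'' D''. closed_add_subgroup (f ` H) \<and> closed_decomp (f ` H) E'' D'' \<and> closed_iso E D E'' D'' f"
      using hs.part1[OF Kc] dH(5) by simp
    qed
  next
    show "\<forall>F. f ` H = K \<and> closed_add_subgroup F \<and> supplement_defect0 F (kernel_on H f) H \<longrightarrow>
            (\<exists>EF DF. closed_decomp F EF DF \<and> closed_iso EF DF E' D' f)
            \<and> Re (cdim K) = Re (cdim H) - Re (cdim (kernel_on H f))"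
    proof (intro allI impI)
    fix F assume F: "f ` H = K \<and> closed_add_subgroup F \<and> supplement_defect0 F (kernel_on H f) H"
    have "(\<exists>EF DF. closed_decomp F EF DF \<and> closed_iso EF DF E' D' f)
         \<and> Re (cdim (dsum E' D')) = Re (cdim (dsum E D)) - Re (cdim (kernel_on (dsum E D) f))"
      using hs.part2[of F] F dH(5) dK(5) by blast
    then show "(\<exists>EF DF. closed_decomp F EF DF \<and> closed_iso EF DF E' D' f)
            \<and> Re (cdim K) = Re (cdim H) - Re (cdim (kernel_on H f))"
      using dH(5) dK(5) by simp
    qed
  qed
qed

end
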